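(* Let $\Gamma$ be a $d\times k$ categorical random matrix and $\mathbf U=(U_1,\dots,U_k)^\top$ a vector of iid standard uniform random variables independent of $\Gamma$. Then $\mathbf X=\Gamma\mathbf U$ has positive regression dependence (PRD).
   Context: A $d\times k$ categorical random matrix is a random matrix with entries in $\{0,1\}$ each of whose rows sums to $1$. A set $A\subseteq\mathbb R^d$ is increasing if $\mathbf x\in A$ and $\mathbf y\ge\mathbf x$ (componentwise) imply $\mathbf y\in A$. $\mathbf X=(X_1,\dots,X_d)$ has PRD if for every $i\in[d]$ and every increasing set $A\subseteq\mathbb R^d$, the function $x\mapsto\mathbb P(\mathbf X\in A\mid X_i=x)$ is increasing. *)

theory Defs
  imports "HOL-Probability.Probability"
begin

definition categorical_matrix :: "real^'k^'d \<Rightarrow> bool" where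
  "categorical_matrix G \<longleftrightarrow>
     (\<forall>i j. G $ i $ j \<in> {0, 1}) \<and> (\<forall>i. (\<Sum>j\<in>UNIV. G $ i $ j) = 1)"

definition increasing_set :: "(real^'d) set \<Rightarrow> bool" where
  "increasing_set A \<longleftrightarrow> (\<forall>x y. x \<in> A \<and> (\<forall>i. x $ i \<le> y $ i) \<longrightarrow> y \<in> A)"

text \<open>Positive regression dependence: for every coordinate i and every (Borel)
  increasing set A, the conditional probability P(X \<in> A | X_i = x) admits an
  increasing version, i.e. a Borel function g of x with
  P(X \<in> A, X_i \<in> B) = \<integral>_B g dP_{X_i} for all Borel B.\<close>
definition PRD :: "'a measure \<Rightarrow> ('a \<Rightarrow> real^'d) \<Rightarrow> bool" where
  "PRD M X \<longleftrightarrow>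
     (\<forall>i. \<forall>A \<in> sets borel. increasing_set A \<longrightarrow>
        (\<exists>g :: real \<Rightarrow> real. mono g \<and> g \<in> borel_measurable borel \<and>
           (\<forall>x. 0 \<le> g x \<and> g x \<le> 1) \<and>
           (\<forall>B \<in> sets borel.
              measure M {\<omega> \<in> space M. X \<omega> \<in> A \<and> X \<omega> $ i \<in> B} =
              (\<integral>x. indicator B x * g x \<partial>(distr M borel (\<lambda>\<omega>. X \<omega> $ i))))))"

end

theory Submission
  imports Defs
begin

lemma vec_nth_measurable[measurable (raw)]:
  fixes f :: "'m \<Rightarrow> 'a::euclidean_space^'n"
  assumes "f \<in> borel_measurable M"
  shows "(\<lambda>x. f x $ i) \<in> borel_measurable M"
proof -
  have "(\<lambda>x. f x \<bullet> axis i b) \<in> borel_measurable M" if "b \<in> Basis" for b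
    using assms that unfolding borel_measurable_euclidean_space[of f] 
    by (auto simp: Basis_vec_def)
  then show ?thesis unfolding borel_measurable_euclidean_space[of "\<lambda>x. f x $ i"]
    by (simp add: inner_axis)
qed

lemma vec_lambda_measurable:
  fixes f :: "'m \<Rightarrow> 'n::finite \<Rightarrow> 'a::euclidean_space"
  assumes "\<And>j. (\<lambda>x. f x j) \<in> borel_measurable M"
  shows "(\<lambda>x. vec_lambda (f x)) \<in> borel_measurable M"
  unfolding borel_measurable_euclidean_space[of "\<lambda>x. vec_lambda (f x)"]
proof
  fix b :: "'a^'n" assume "b \<in> Basis"
  then obtain j u where b: "b = axis j u" "u \<in> Basis" by (auto simp: Basis_vec_def)
  have "(\<lambda>x. f x j \<bullet> u) \<in> borel_measurable M" using assms[of j] b(2)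
    unfolding borel_measurable_euclidean_space[of "\<lambda>x. f x j"] by auto
  then show "(\<lambda>x. vec_lambda (f x) \<bullet> b) \<in> borel_measurable M"
    using b by (simp add: inner_axis)
qed

lemma mult_vec_measurable[measurable (raw)]:
  fixes G :: "'m \<Rightarrow> real^'k^'d" and U :: "'m \<Rightarrow> real^'k"
  assumes "G \<in> borel_measurable M" "U \<in> borel_measurable M"
  shows "(\<lambda>x. G x *v U x) \<in> borel_measurable M"
  unfolding matrix_vector_mult_def
  by (rule vec_lambda_measurable) (use assms in measurable)

lemma upd_measurable:
  fixes c :: "'k::finite"
  shows "(\<lambda>p::real \<times> (real^'k). \<chi> j. if j = c then fst p else snd p $ j) \<in> borel_measurable borel"
  unfolding borel_prod[symmetric]
proof (rule vec_lambda_measurable)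
  fix j
  show "(\<lambda>x::real \<times> (real^'k). if j = c then fst x else snd x $ j) \<in> borel_measurable (borel \<Otimes>\<^sub>M borel)"
  proof (cases "j = c")
    case False
    have "(\<lambda>x. snd x $ j) \<in> borel_measurable ((borel::real measure) \<Otimes>\<^sub>M (borel :: (real^'k) measure))"
      by (rule vec_nth_measurable[where f=snd, OF measurable_snd])
    then show ?thesis using False by simp
  qed simp
qed

definition upd :: "real^'k \<Rightarrow> 'k \<Rightarrow> real \<Rightarrow> real^'k" where
  "upd u c x = (\<chi> j. if j = c then x else u $ j)"

lemma upd_pair_measurable:
  "(\<lambda>p::real \<times> (real^'k). upd (snd p) c (fst p)) \<in> borel_measurable (borel \<Otimes>\<^sub>M borel)"
  using upd_measurable[of c] unfolding upd_def borel_prod .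

lemma upd_measurable2[measurable]:
  fixes c :: "'k::finite"
  shows "(\<lambda>w. upd w c x) \<in> borel_measurable borel"
  unfolding upd_def
proof (rule vec_lambda_measurable)
  fix j
  show "(\<lambda>w::real^'k. if j = c then x else w $ j) \<in> borel_measurable borel"
    by (cases "j = c") simp_all
qed

lemma upd_measurable3[measurable]:
  fixes c :: "'k::finite"
  shows "(\<lambda>x. upd w c x) \<in> borel_measurable borel"
  unfolding upd_def
proof (rule vec_lambda_measurable)
  fix j
  show "(\<lambda>x::real. if j = c then x else w $ j) \<in> borel_measurable borel"
    by (cases "j = c") simp_all
qed

lemma (in prob_space) key:
  fixes U :: "'a \<Rightarrow> real^'k" and c :: 'k and A' :: "(real^'k) set" and B :: "real set"
  assumes U: "U \<in> borel_measurable M"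
   and ind: "indep_vars (\<lambda>_. borel) (\<lambda>j \<omega>. U \<omega> $ j) UNIV"
   and A': "A' \<in> sets borel" and B: "B \<in> sets borel"
  shows "emeasure M {\<omega>\<in>space M. U \<omega> \<in> A' \<and> U \<omega> $ c \<in> B} =
    (\<integral>\<^sup>+x. indicator B x * emeasure M {\<omega>\<in>space M. upd (U \<omega>) c x \<in> A'} \<partial>(distr M borel (\<lambda>\<omega>. U \<omega> $ c)))"
proof -
  define W where "W \<omega> = upd (U \<omega>) c 0" for \<omega>
  define V where "V \<omega> = upd 0 c (U \<omega> $ c)" for \<omega>
  have Wm: "W \<in> borel_measurable M" unfolding W_def
    using measurable_comp[OF U upd_measurable2[of c 0]] by (simp add: comp_def)
  have Ucm: "(\<lambda>\<omega>. U \<omega> $ c) \<in> borel_measurable M" using U by measurable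
  have Vm: "V \<in> borel_measurable M" unfolding V_def
    using measurable_comp[OF Ucm upd_measurable3[of 0 c]] by (simp add: comp_def)
  have ir: "indep_var (PiM {c} (\<lambda>_. borel)) (\<lambda>\<omega>. restrict (\<lambda>i. U \<omega> $ i) {c})
      (PiM (UNIV - {c}) (\<lambda>_. borel)) (\<lambda>\<omega>. restrict (\<lambda>i. U \<omega> $ i) (UNIV - {c}))"
    by (rule indep_var_restrict[OF ind]) auto
  have Y1: "(\<lambda>f. upd 0 c (f c)) \<in> measurable (PiM {c} (\<lambda>_. borel)) (borel :: (real^'k) measure)"
    using measurable_comp[OF measurable_component_singleton[of c "{c}" "\<lambda>_. borel :: real measure"] upd_measurable3[of 0 c]]
    by (simp add: comp_def)
  have Y2: "(\<lambda>f. \<chi> j. if j = c then 0 else f j) \<in> measurable (PiM (UNIV - {c}) (\<lambda>_. borel)) (borel :: (real^'k) measure)"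
  proof (rule vec_lambda_measurable)
    fix j
    show "(\<lambda>f. if j = c then 0 else f j) \<in> borel_measurable (PiM (UNIV - {c}) (\<lambda>_. borel :: real measure))"
      by (cases "j = c") (simp_all add: measurable_component_singleton)
  qed
  have "indep_var borel ((\<lambda>f. upd 0 c (f c)) \<circ> (\<lambda>\<omega>. restrict (\<lambda>i. U \<omega> $ i) {c}))
      borel ((\<lambda>f. \<chi> j. if j = c then 0 else f j) \<circ> (\<lambda>\<omega>. restrict (\<lambda>i. U \<omega> $ i) (UNIV - {c})))"
    by (rule indep_var_compose[OF ir Y1 Y2])
  moreover have "((\<lambda>f. upd 0 c (f c)) \<circ> (\<lambda>\<omega>. restrict (\<lambda>i. U \<omega> $ i) {c})) = V"
    by (auto simp: V_def)
  moreover have "((\<lambda>f. \<chi> j. if j = c then 0 else f j) \<circ> (\<lambda>\<omega>. restrict (\<lambda>i. U \<omega> $ i) (UNIV - {c}))) = W"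
    by (auto simp: W_def upd_def fun_eq_iff vec_eq_iff)
  ultimately have indep: "indep_var borel V borel W" by simp
  then have joint: "distr M borel V \<Otimes>\<^sub>M distr M borel W =
      distr M (borel \<Otimes>\<^sub>M borel) (\<lambda>\<omega>. (V \<omega>, W \<omega>))"
    unfolding indep_var_distribution_eq by blast
  interpret DW: prob_space "distr M borel W" by (rule prob_space_distr[OF Wm])
  define S where "S = {p :: (real^'k) \<times> (real^'k). fst p + snd p \<in> A' \<and> fst p $ c \<in> B}"
  have S: "S \<in> sets (borel \<Otimes>\<^sub>M borel)"
  proof -
    have am: "(\<lambda>p :: (real^'k) \<times> (real^'k). fst p + snd p) \<in> borel_measurable (borel \<Otimes>\<^sub>M borel)"
      by measurable
    have cm: "(\<lambda>p :: (real^'k) \<times> (real^'k). fst p $ c) \<in> borel_measurable (borel \<Otimes>\<^sub>M borel)"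
      by (rule vec_nth_measurable[OF measurable_fst])
    have "S = ((\<lambda>p. fst p + snd p) -` A' \<inter> space (borel \<Otimes>\<^sub>M borel)) \<inter>
              ((\<lambda>p. fst p $ c) -` B \<inter> space (borel \<Otimes>\<^sub>M borel))"
      by (auto simp: S_def space_pair_measure)
    also have "\<dots> \<in> sets (borel \<Otimes>\<^sub>M borel)"
      by (intro sets.Int measurable_sets[OF am A'] measurable_sets[OF cm B])
    finally show ?thesis .
  qed
  have S': "S \<in> sets (borel \<Otimes>\<^sub>M distr M borel W)" using S by simp
  have PM: "(\<lambda>\<omega>. (V \<omega>, W \<omega>)) \<in> measurable M (borel \<Otimes>\<^sub>M borel)"
    using Vm Wm by measurable
  have pw: "emeasure (distr M borel W) (Pair (upd 0 c x) -` S) = indicator B x * emeasure M {\<omega>'\<in>space M. upd (U \<omega>') c x \<in> A'}" for x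
  proof -
    have m: "{w. upd 0 c x + w \<in> A'} \<in> sets borel"
    proof -
      have "(\<lambda>w. upd 0 c x + w) \<in> borel_measurable (borel :: (real^'k) measure)" by measurable
      from measurable_sets[OF this A'] show ?thesis by (simp add: vimage_def)
    qed
    have "emeasure (distr M borel W) {w. upd 0 c x + w \<in> A'} = emeasure M (W -` {w. upd 0 c x + w \<in> A'} \<inter> space M)"
      by (rule emeasure_distr[OF Wm m])
    also have "W -` {w. upd 0 c x + w \<in> A'} \<inter> space M = {\<omega>'\<in>space M. upd (U \<omega>') c x \<in> A'}"
    proof -
      have "upd 0 c x + W \<omega>' = upd (U \<omega>') c x" for \<omega>'
        by (auto simp: W_def upd_def vec_eq_iff)
      then show ?thesis by auto
    qed
    finally have e: "emeasure (distr M borel W) {w. upd 0 c x + w \<in> A'} = emeasure M {\<omega>'\<in>space M. upd (U \<omega>') c x \<in> A'}" .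
    show ?thesis
    proof (cases "x \<in> B")
      case True
      then have "Pair (upd 0 c x) -` S = {w. upd 0 c x + w \<in> A'}" by (auto simp: S_def upd_def)
      then show ?thesis using True e by simp
    next
      case False
      then have "Pair (upd 0 c x) -` S = {}" by (auto simp: S_def upd_def)
      then show ?thesis using False by simp
    qed
  qed
  have Fm: "(\<lambda>x. emeasure (distr M borel W) (Pair (upd 0 c x) -` S)) \<in> borel_measurable borel"
    using measurable_comp[OF upd_measurable3[of 0 c] DW.measurable_emeasure_Pair[OF S']]
    by (simp add: comp_def)
  have VW: "V \<omega> + W \<omega> = U \<omega>" for \<omega>
    by (auto simp: W_def V_def upd_def vec_eq_iff)
  have Vc: "V \<omega> $ c = U \<omega> $ c" for \<omega>
    by (auto simp: V_def upd_def)
  have "{\<omega>\<in>space M. U \<omega> \<in> A' \<and> U \<omega> $ c \<in> B} = (\<lambda>\<omega>. (V \<omega>, W \<omega>)) -` S \<inter> space M"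
    by (auto simp: S_def VW Vc)
  then have "emeasure M {\<omega>\<in>space M. U \<omega> \<in> A' \<and> U \<omega> $ c \<in> B} =
      emeasure (distr M (borel \<Otimes>\<^sub>M borel) (\<lambda>\<omega>. (V \<omega>, W \<omega>))) S"
    by (simp add: emeasure_distr[OF PM S])
  also have "\<dots> = emeasure (distr M borel V \<Otimes>\<^sub>M distr M borel W) S"
    by (simp add: joint)
  also have "\<dots> = (\<integral>\<^sup>+v. emeasure (distr M borel W) (Pair v -` S) \<partial>(distr M borel V))"
    by (rule DW.emeasure_pair_measure_alt) (use S in simp)
  also have "\<dots> = (\<integral>\<^sup>+\<omega>. emeasure (distr M borel W) (Pair (V \<omega>) -` S) \<partial>M)"
    by (rule nn_integral_distr[OF Vm]) (use DW.measurable_emeasure_Pair[OF S'] in simp)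
  also have "\<dots> = (\<integral>\<^sup>+\<omega>. emeasure (distr M borel W) (Pair (upd 0 c (U \<omega> $ c)) -` S) \<partial>M)"
    by (simp add: V_def)
  also have "\<dots> = (\<integral>\<^sup>+x. emeasure (distr M borel W) (Pair (upd 0 c x) -` S) \<partial>(distr M borel (\<lambda>\<omega>. U \<omega> $ c)))"
    by (rule nn_integral_distr[OF Ucm, symmetric]) (use Fm in simp)
  also have "\<dots> = (\<integral>\<^sup>+x. indicator B x * emeasure M {\<omega>\<in>space M. upd (U \<omega>) c x \<in> A'} \<partial>(distr M borel (\<lambda>\<omega>. U \<omega> $ c)))"
    by (simp add: pw)
  finally show ?thesis .
qed
lemma cat_props:
  assumes "categorical_matrix G"
  shows "G $ i $ (SOME j. G $ i $ j = 1) = 1" "\<And>j. j \<noteq> (SOME j. G $ i $ j = 1) \<Longrightarrow> G $ i $ j = 0"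
proof -
  have ent: "G $ i $ j = 0 \<or> G $ i $ j = 1" for j using assms by (auto simp: categorical_matrix_def)
  have s: "(\<Sum>j\<in>UNIV. G $ i $ j) = 1" using assms by (auto simp: categorical_matrix_def)
  have nn: "0 \<le> G $ i $ j" for j using ent[of j] by auto
  have ex: "\<exists>j. G $ i $ j = 1"
  proof (rule ccontr)
    assume "\<not> ?thesis"
    then have "\<forall>j. G $ i $ j = 0" using ent by blast
    then show False using s by simp
  qed
  define c where "c = (SOME j. G $ i $ j = 1)"
  show c1: "G $ i $ (SOME j. G $ i $ j = 1) = 1" using someI_ex[OF ex] .
  fix j assume "j \<noteq> (SOME j. G $ i $ j = 1)"
  then have jc: "j \<noteq> c" by (simp add: c_def)
  show "G $ i $ j = 0"
  proof (rule ccontr)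
    assume "G $ i $ j \<noteq> 0"
    then have "G $ i $ j = 1" using ent by blast
    have "(\<Sum>l\<in>{c, j}. G $ i $ l) \<le> (\<Sum>l\<in>UNIV. G $ i $ l)"
      by (rule sum_mono2) (auto simp: nn)
    then show False using jc c1 \<open>G $ i $ j = 1\<close> s by (simp add: c_def)
  qed
qed

lemma mv_cat:
  assumes "categorical_matrix G"
  shows "(G *v u) $ i = u $ (SOME j. G $ i $ j = 1)"
proof -
  define c where "c = (SOME j. G $ i $ j = 1)"
  have "G $ i $ j * u $ j = (if j = c then u $ j else 0)" for j
    using cat_props[OF assms, where i=i] by (auto simp: c_def)
  then show ?thesis unfolding matrix_vector_mult_def c_def[symmetric] by simp
qed

lemma finite_CM: "finite {G :: real^'k^'d. categorical_matrix G}"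
proof (rule finite_subset)
  show "{G :: real^'k^'d. categorical_matrix G} \<subseteq> (\<lambda>p::('d \<times> 'k) \<Rightarrow> bool. \<chi> i j. if p (i,j) then 1 else 0) ` UNIV"
  proof
    fix G :: "real^'k^'d" assume "G \<in> {G. categorical_matrix G}"
    then have ent: "G $ i $ j = 0 \<or> G $ i $ j = 1" for i j by (auto simp: categorical_matrix_def)
    have "G = (\<chi> i j. if (\<lambda>(i,j). G $ i $ j = 1) (i,j) then 1 else 0)"
      using ent by (auto simp: vec_eq_iff)
    then show "G \<in> (\<lambda>p::('d \<times> 'k) \<Rightarrow> bool. \<chi> i j. if p (i,j) then 1 else 0) ` UNIV" by blast
  qed
qed simp

lemma cm_mono:
  assumes "categorical_matrix G" "\<And>j. v $ j \<le> w $ j"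
  shows "(G *v v) $ l \<le> (G *v w) $ l"
proof -
  have "0 \<le> G $ l $ j" for j using assms(1) unfolding categorical_matrix_def by (metis empty_iff insert_iff order_refl zero_le_one)
  then show ?thesis unfolding matrix_vector_mult_def
    by (auto intro!: sum_mono mult_left_mono assms(2))
qed

lemma sets_eq_pred:
  assumes "f \<in> borel_measurable M" "A \<in> sets borel"
  shows "{\<omega>\<in>space M. f \<omega> \<in> A} \<in> sets M"
proof -
  have "{\<omega>\<in>space M. f \<omega> \<in> A} = f -` A \<inter> space M" by auto
  then show ?thesis using measurable_sets[OF assms] by simp
qed

theorem proposition9:
  fixes M :: "'a measure"
    and Gamma :: "'a \<Rightarrow> real^'k^'d"
    and U :: "'a \<Rightarrow> real^'k"
  assumes "prob_space M"
    and "Gamma \<in> borel_measurable M"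
    and "\<forall>\<omega>\<in>space M. categorical_matrix (Gamma \<omega>)"
    and "U \<in> borel_measurable M"
    and "prob_space.indep_vars M (\<lambda>_. borel) (\<lambda>j \<omega>. U \<omega> $ j) UNIV"
    and "\<forall>j. distr M borel (\<lambda>\<omega>. U \<omega> $ j) = uniform_measure lborel {0..1}"
    and "\<forall>S \<in> sets borel. \<forall>T \<in> sets borel.
       measure M {\<omega> \<in> space M. Gamma \<omega> \<in> S \<and> U \<omega> \<in> T} =
       measure M {\<omega> \<in> space M. Gamma \<omega> \<in> S} * measure M {\<omega> \<in> space M. U \<omega> \<in> T}"
  shows "PRD M (\<lambda>\<omega>. Gamma \<omega> *v U \<omega>)"
proof -
  interpret P: prob_space M by (rule assms(1))
  note Gm = assms(2) and Um = assms(4)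
  define X where "X \<omega> = Gamma \<omega> *v U \<omega>" for \<omega>
  have Xm: "X \<in> borel_measurable M" unfolding X_def using Gm Um by (rule mult_vec_measurable)
  define CM where "CM = {G :: real^'k^'d. categorical_matrix G}"
  have fin: "finite CM" unfolding CM_def by (rule finite_CM)
  define Unif where "Unif = uniform_measure lborel {0..1::real}"
  interpret UP: prob_space Unif unfolding Unif_def by (rule prob_space_uniform_measure) simp_all
  have sUnif: "sets Unif = sets borel" by (simp add: Unif_def)
  have distU: "distr M borel (\<lambda>\<omega>. U \<omega> $ j) = Unif" for j using assms(6) by (simp add: Unif_def)
  have GS: "{\<omega>\<in>space M. Gamma \<omega> = G} \<in> P.events" for G
    using sets_eq_pred[OF Gm, of "{G}"] by simp
  define pG where "pG G = measure M {\<omega>\<in>space M. Gamma \<omega> = G}" for G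
  have decomp: "measure M Ev = (\<Sum>G\<in>CM. measure M ({\<omega>\<in>space M. Gamma \<omega> = G} \<inter> Ev))"
    if Ev: "Ev \<in> P.events" for Ev
  proof -
    have "Ev = (\<Union>G\<in>CM. {\<omega>\<in>space M. Gamma \<omega> = G} \<inter> Ev)"
      using assms(3) sets.sets_into_space[OF Ev] by (auto simp: CM_def)
    also have "measure M \<dots> = (\<Sum>G\<in>CM. measure M ({\<omega>\<in>space M. Gamma \<omega> = G} \<inter> Ev))"
      apply (rule measure_finite_Union[OF fin])
      subgoal using GS Ev by blast
      subgoal by (auto simp: disjoint_family_on_def)
      subgoal by (simp add: P.emeasure_eq_measure)
      done
    finally show ?thesis .
  qed
  have sum1: "(\<Sum>G\<in>CM. pG G) = 1"
  proof -
    have "1 = measure M (space M)" using P.prob_space by simp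
    also have "\<dots> = (\<Sum>G\<in>CM. pG G)"
      by (subst decomp) (auto simp: pG_def intro!: sum.cong arg_cong[where f="measure M"])
    finally show ?thesis by simp
  qed
  have pG0: "0 \<le> pG G" for G by (simp add: pG_def)
  have split_ev: "measure M ({\<omega>\<in>space M. Gamma \<omega> = G} \<inter> {\<omega>\<in>space M. U \<omega> \<in> T})
      = pG G * measure M {\<omega>\<in>space M. U \<omega> \<in> T}" if "T \<in> sets borel" for G T
  proof -
    have "{\<omega>\<in>space M. Gamma \<omega> = G} \<inter> {\<omega>\<in>space M. U \<omega> \<in> T} = {\<omega>\<in>space M. Gamma \<omega> \<in> {G} \<and> U \<omega> \<in> T}"
      by auto
    moreover have "{\<omega>\<in>space M. Gamma \<omega> = G} = {\<omega>\<in>space M. Gamma \<omega> \<in> {G}}" by auto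
    moreover have "{G} \<in> sets (borel :: (real^'k^'d) measure)" by simp
    ultimately show ?thesis using assms(7)[rule_format, OF \<open>{G} \<in> sets borel\<close> that] by (simp only: pG_def)
  qed
  have lin_m: "(\<lambda>u. G *v u) \<in> borel_measurable (borel :: (real^'k) measure)" for G :: "real^'k^'d"
    using mult_vec_measurable[OF measurable_const measurable_ident_sets[OF refl]] by simp
  have nth_m: "(\<lambda>u::real^'k. u $ c) \<in> borel_measurable borel" for c
    using vec_nth_measurable[OF measurable_ident_sets[OF refl]] by simp
  have "PRD M X"
    unfolding PRD_def
  proof (intro allI ballI impI)
    fix i A assume A: "A \<in> sets (borel :: (real^'d) measure)" and inc: "increasing_set A"
    define cat where "cat G = (SOME j. G $ i $ j = 1)" for G :: "real^'k^'d"
    define h where "h G x = measure M {\<omega>\<in>space M. G *v upd (U \<omega>) (cat G) x \<in> A}" for G x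
    define g where "g x = (\<Sum>G\<in>CM. pG G * h G x)" for x
    have h01: "0 \<le> h G x" "h G x \<le> 1" for G x by (simp_all add: h_def)
    have hmono: "mono (h G)" if "G \<in> CM" for G
    proof
      fix x y :: real assume "x \<le> y"
      have sub: "{\<omega>\<in>space M. G *v upd (U \<omega>) (cat G) x \<in> A} \<subseteq> {\<omega>\<in>space M. G *v upd (U \<omega>) (cat G) y \<in> A}"
      proof safe
        fix \<omega> assume "G *v upd (U \<omega>) (cat G) x \<in> A"
        moreover have "\<forall>l. (G *v upd (U \<omega>) (cat G) x) $ l \<le> (G *v upd (U \<omega>) (cat G) y) $ l"
          using that \<open>x \<le> y\<close> by (auto intro!: cm_mono simp: CM_def upd_def)
        ultimately show "G *v upd (U \<omega>) (cat G) y \<in> A" using inc unfolding increasing_set_def by blast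
      qed
      have "{\<omega>\<in>space M. G *v upd (U \<omega>) (cat G) y \<in> A} \<in> P.events"
      proof (rule sets_eq_pred[OF _ A])
        show "(\<lambda>\<omega>. G *v upd (U \<omega>) (cat G) y) \<in> borel_measurable M"
          using measurable_comp[OF measurable_comp[OF Um upd_measurable2[of "cat G" y]] lin_m[of G]]
          by (simp add: comp_def)
      qed
      then show "h G x \<le> h G y" unfolding h_def by (rule P.finite_measure_mono[OF sub])
    qed
    have gmono: "mono g"
      unfolding g_def mono_def
      by (auto intro!: sum_mono mult_left_mono pG0 dest: hmono simp: mono_def)
    have g0: "0 \<le> g x" for x unfolding g_def by (auto intro!: sum_nonneg simp: pG0 h01)
    have g1: "g x \<le> 1" for x
    proof -
      have "g x \<le> (\<Sum>G\<in>CM. pG G * 1)" unfolding g_def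
        by (intro sum_mono mult_left_mono pG0 h01)
      then show ?thesis using sum1 by simp
    qed
    have gm: "g \<in> borel_measurable borel" by (rule borel_measurable_mono[OF gmono])
    have hint: "integrable Unif (\<lambda>x. indicator B x * h G x)" if "G \<in> CM" "B \<in> sets borel" for G B
    proof (rule UP.integrable_const_bound[where B=1])
      show "AE x in Unif. norm (indicator B x * h G x) \<le> 1"
        using h01 by (auto simp: indicator_def)
      have "(\<lambda>x. indicator B x * h G x) \<in> borel_measurable borel"
        using borel_measurable_mono[OF hmono[OF that(1)]] that(2) by measurable
      then show "(\<lambda>x. indicator B x * h G x) \<in> borel_measurable Unif"
        by (subst measurable_cong_sets[OF sUnif refl])
    qed
    have Xi: "X \<omega> $ i = U \<omega> $ cat (Gamma \<omega>)" if "\<omega> \<in> space M" for \<omega>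
      using mv_cat[of "Gamma \<omega>" "U \<omega>" i] assms(3) that by (simp add: X_def cat_def)
    have Xim: "(\<lambda>\<omega>. X \<omega> $ i) \<in> borel_measurable M" using Xm by measurable
    have Di: "distr M borel (\<lambda>\<omega>. X \<omega> $ i) = Unif"
    proof (rule measure_eqI)
      show "sets (distr M borel (\<lambda>\<omega>. X \<omega> $ i)) = sets Unif" by (simp add: sUnif)
      fix Bs assume "Bs \<in> sets (distr M borel (\<lambda>\<omega>. X \<omega> $ i))"
      then have Bs: "Bs \<in> sets borel" by simp
      have ev: "{\<omega>\<in>space M. X \<omega> $ i \<in> Bs} \<in> P.events" by (rule sets_eq_pred[OF Xim Bs])
      have "measure M {\<omega>\<in>space M. X \<omega> $ i \<in> Bs} =
          (\<Sum>G\<in>CM. measure M ({\<omega>\<in>space M. Gamma \<omega> = G} \<inter> {\<omega>\<in>space M. X \<omega> $ i \<in> Bs}))"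
        by (rule decomp[OF ev])
      also have "\<dots> = (\<Sum>G\<in>CM. pG G * measure Unif Bs)"
      proof (rule sum.cong[OF refl])
        fix G assume G: "G \<in> CM"
        have s1: "{\<omega>\<in>space M. Gamma \<omega> = G} \<inter> {\<omega>\<in>space M. X \<omega> $ i \<in> Bs} =
            {\<omega>\<in>space M. Gamma \<omega> = G} \<inter> {\<omega>\<in>space M. U \<omega> \<in> {u. u $ cat G \<in> Bs}}"
          using Xi by auto
        have Tb: "{u. u $ cat G \<in> Bs} \<in> sets borel"
          using measurable_sets[OF nth_m Bs] by (simp add: vimage_def)
        have e3: "measure M {\<omega>\<in>space M. U \<omega> \<in> {u. u $ cat G \<in> Bs}} = measure Unif Bs"
        proof -
          have "measure Unif Bs = measure M ((\<lambda>\<omega>. U \<omega> $ cat G) -` Bs \<inter> space M)"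
            unfolding distU[of "cat G", symmetric]
            by (rule measure_distr) (use Um Bs in measurable)
          then show ?thesis by (simp add: vimage_def Int_def conj_commute)
        qed
        show "measure M ({\<omega>\<in>space M. Gamma \<omega> = G} \<inter> {\<omega>\<in>space M. X \<omega> $ i \<in> Bs}) = pG G * measure Unif Bs"
          unfolding s1 split_ev[OF Tb] e3 ..
      qed
      also have "\<dots> = measure Unif Bs" using sum1 by (simp add: sum_distrib_right[symmetric])
      finally have "measure M {\<omega>\<in>space M. X \<omega> $ i \<in> Bs} = measure Unif Bs" .
      moreover have "emeasure (distr M borel (\<lambda>\<omega>. X \<omega> $ i)) Bs = emeasure M {\<omega>\<in>space M. X \<omega> $ i \<in> Bs}"
        by (subst emeasure_distr[OF Xim Bs]) (simp add: vimage_def Int_def conj_commute)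
      ultimately show "emeasure (distr M borel (\<lambda>\<omega>. X \<omega> $ i)) Bs = emeasure Unif Bs"
        by (simp add: P.emeasure_eq_measure UP.emeasure_eq_measure)
    qed
    have core: "measure M ({\<omega>\<in>space M. Gamma \<omega> = G} \<inter> {\<omega>\<in>space M. X \<omega> \<in> A \<and> X \<omega> $ i \<in> B})
        = pG G * (\<integral>x. indicator B x * h G x \<partial>Unif)" if G: "G \<in> CM" and B: "B \<in> sets borel" for G B
    proof -
      define c where "c = cat G"
      define A' where "A' = {u. G *v u \<in> A}"
      have A': "A' \<in> sets borel"
        using measurable_sets[OF lin_m A] by (simp add: A'_def vimage_def)
      define T where "T = {u. u \<in> A' \<and> u $ c \<in> B}"
      have T: "T \<in> sets borel"
      proof -
        have "T = A' \<inter> ((\<lambda>u. u $ c) -` B \<inter> space borel)" by (auto simp: T_def)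
        then show ?thesis using A' measurable_sets[OF nth_m B] by simp
      qed
      have mvc: "(G *v u) $ i = u $ c" for u
        using mv_cat[of G u i] G by (simp add: CM_def c_def cat_def)
      have "{\<omega>\<in>space M. Gamma \<omega> = G} \<inter> {\<omega>\<in>space M. X \<omega> \<in> A \<and> X \<omega> $ i \<in> B} =
          {\<omega>\<in>space M. Gamma \<omega> = G} \<inter> {\<omega>\<in>space M. U \<omega> \<in> T}"
      proof -
        have Xc: "X \<omega> $ i = U \<omega> $ c \<and> X \<omega> = G *v U \<omega>" if "Gamma \<omega> = G" for \<omega>
          using that by (simp add: X_def mvc)
        have "{\<omega>\<in>space M. Gamma \<omega> = G} \<inter> {\<omega>\<in>space M. X \<omega> \<in> A \<and> X \<omega> $ i \<in> B} =
            {\<omega>\<in>space M. Gamma \<omega> = G \<and> (X \<omega> \<in> A \<and> X \<omega> $ i \<in> B)}" by blast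
        also have "\<dots> = {\<omega>\<in>space M. Gamma \<omega> = G \<and> U \<omega> \<in> T}"
        proof (rule Collect_cong)
          fix \<omega>
          show "(\<omega> \<in> space M \<and> Gamma \<omega> = G \<and> (X \<omega> \<in> A \<and> X \<omega> $ i \<in> B)) = (\<omega> \<in> space M \<and> Gamma \<omega> = G \<and> U \<omega> \<in> T)"
          proof (cases "Gamma \<omega> = G")
            case True
            then show ?thesis using Xc[OF True] by (simp add: T_def A'_def mvc)
          qed simp
        qed
        also have "\<dots> = {\<omega>\<in>space M. Gamma \<omega> = G} \<inter> {\<omega>\<in>space M. U \<omega> \<in> T}" by blast
        finally show ?thesis .
      qed
      then have e1: "measure M ({\<omega>\<in>space M. Gamma \<omega> = G} \<inter> {\<omega>\<in>space M. X \<omega> \<in> A \<and> X \<omega> $ i \<in> B})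
          = pG G * measure M {\<omega>\<in>space M. U \<omega> \<in> T}" using split_ev[OF T] by simp
      have "emeasure M {\<omega>\<in>space M. U \<omega> \<in> A' \<and> U \<omega> $ c \<in> B} =
        (\<integral>\<^sup>+x. indicator B x * emeasure M {\<omega>\<in>space M. upd (U \<omega>) c x \<in> A'} \<partial>(distr M borel (\<lambda>\<omega>. U \<omega> $ c)))"
        by (rule P.key[OF Um assms(5) A' B])
      also have "\<dots> = (\<integral>\<^sup>+x. ennreal (indicator B x * h G x) \<partial>Unif)"
        unfolding distU
      proof (rule nn_integral_cong)
        fix x
        have "emeasure M {\<omega>\<in>space M. upd (U \<omega>) c x \<in> A'} = ennreal (h G x)"
          by (simp add: h_def P.emeasure_eq_measure A'_def c_def)
        then show "indicator B x * emeasure M {\<omega>\<in>space M. upd (U \<omega>) c x \<in> A'} = ennreal (indicator B x * h G x)"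
          by (cases "x \<in> B") simp_all
      qed
      also have "\<dots> = ennreal (\<integral>x. indicator B x * h G x \<partial>Unif)"
        by (rule nn_integral_eq_integral[OF hint[OF G B]]) (auto simp: h01)
      finally have "ennreal (measure M {\<omega>\<in>space M. U \<omega> \<in> T}) = ennreal (\<integral>x. indicator B x * h G x \<partial>Unif)"
        by (simp add: P.emeasure_eq_measure T_def)
      then have "measure M {\<omega>\<in>space M. U \<omega> \<in> T} = (\<integral>x. indicator B x * h G x \<partial>Unif)"
        by (subst (asm) ennreal_inj) (auto intro!: integral_nonneg_AE simp: h01)
      then show ?thesis using e1 by simp
    qed
    show "\<exists>g :: real \<Rightarrow> real. mono g \<and> g \<in> borel_measurable borel \<and>
           (\<forall>x. 0 \<le> g x \<and> g x \<le> 1) \<and>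
           (\<forall>B \<in> sets borel.
              measure M {\<omega> \<in> space M. X \<omega> \<in> A \<and> X \<omega> $ i \<in> B} =
              (\<integral>x. indicator B x * g x \<partial>(distr M borel (\<lambda>\<omega>. X \<omega> $ i))))"
    proof (intro exI[of _ g] conjI allI ballI gmono gm g0 g1)
      fix B :: "real set" assume B: "B \<in> sets borel"
      have ev: "{\<omega>\<in>space M. X \<omega> \<in> A \<and> X \<omega> $ i \<in> B} \<in> P.events"
      proof -
        have "{\<omega>\<in>space M. X \<omega> \<in> A \<and> X \<omega> $ i \<in> B} = {\<omega>\<in>space M. X \<omega> \<in> A} \<inter> {\<omega>\<in>space M. X \<omega> $ i \<in> B}"
          by auto
        then show ?thesis using sets_eq_pred[OF Xm A] sets_eq_pred[OF Xim B] by simp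
      qed
      have "measure M {\<omega>\<in>space M. X \<omega> \<in> A \<and> X \<omega> $ i \<in> B} =
          (\<Sum>G\<in>CM. pG G * (\<integral>x. indicator B x * h G x \<partial>Unif))"
        by (subst decomp[OF ev]) (auto intro!: sum.cong core B)
      also have "\<dots> = (\<integral>x. (\<Sum>G\<in>CM. pG G * (indicator B x * h G x)) \<partial>Unif)"
      proof -
        have "(\<integral>x. (\<Sum>G\<in>CM. pG G * (indicator B x * h G x)) \<partial>Unif) =
            (\<Sum>G\<in>CM. (\<integral>x. pG G * (indicator B x * h G x) \<partial>Unif))"
        proof -
          have "integrable Unif (\<lambda>x. pG G * (indicator B x * h G x))" if "G \<in> CM" for G
            by (intro integrable_mult_right hint[OF that B])
          then show ?thesis
            using Bochner_Integration.integral_sum[where I=CM and M=Unif and f="\<lambda>G x. pG G * (indicator B x * h G x)"] by simp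
        qed
        then show ?thesis by simp
      qed
      also have "\<dots> = (\<integral>x. indicator B x * g x \<partial>Unif)"
        by (rule Bochner_Integration.integral_cong) (auto simp: g_def sum_distrib_left algebra_simps)
      finally show "measure M {\<omega>\<in>space M. X \<omega> \<in> A \<and> X \<omega> $ i \<in> B} =
          (\<integral>x. indicator B x * g x \<partial>(distr M borel (\<lambda>\<omega>. X \<omega> $ i)))"
        by (simp add: Di)
    qed
  qed
  moreover have "(\<lambda>\<omega>. Gamma \<omega> *v U \<omega>) = X" by (simp add: X_def fun_eq_iff)
  ultimately show ?thesis by simp
qed

end
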